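(* For every integer $r\ge 0$ and all real $x$, $$\operatorname{sech}^{2r+1}x=\frac{(-1)^r}{(2r)!}\prod_{k=1}^{r}\Big(\frac{d^2}{dx^2}-(2k-1)^2\Big)\operatorname{sech}x=\frac{1}{(2r)!}\sum_{\rho=0}^{r}(-1)^{\rho}\,\mathcal G^r_\rho\,\frac{d^{2\rho}}{dx^{2\rho}}\operatorname{sech}x ,$$ where the integers $\mathcal G^r_\rho$ ($0\le\rho\le r$) are determined by $\mathcal G^0_0=1$, the conventions $\mathcal G^r_{-1}=\mathcal G^r_{r+1}=0$, and the recursion $\mathcal G^r_\rho=(2r-1)^2\mathcal G^{r-1}_\rho+\mathcal G^{r-1}_{\rho-1}$ for $r\ge1$, $0\le\rho\le r$. In particular $\mathcal G^r_r=1$.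
   Context: The empty product (for $r=0$) is the identity operator. *)

theory Defs
  imports "HOL-Analysis.Analysis"
begin

definition sech :: "real \<Rightarrow> real" where
  "sech x = 1 / cosh x"

fun sech_ops :: "nat \<Rightarrow> (real \<Rightarrow> real) \<Rightarrow> (real \<Rightarrow> real)" where
  "sech_ops 0 f = f"
| "sech_ops (Suc r) f =
     (\<lambda>x. deriv (deriv (sech_ops r f)) x - (2 * real r + 1)^2 * sech_ops r f x)"

text \<open>The integers G^r_rho, with G^r_rho = 0 outside 0 <= rho <= r (the conventions
  G^r_{-1} = 0 handled by the rho = 0 case, G^r_{r+1} = 0 automatic).\<close>
fun G :: "nat \<Rightarrow> nat \<Rightarrow> int" where
  "G 0 \<rho> = (if \<rho> = 0 then 1 else 0)"
| "G (Suc r) \<rho> = (2 * int r + 1)^2 * G r \<rho> + (if \<rho> = 0 then 0 else G r (\<rho> - 1))"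

end

theory Submission imports Defs "HOL-Computational_Algebra.Polynomial" begin

lemma tanh_sq: "tanh x ^ 2 = 1 - sech x ^ 2"
proof -
  have "tanh x ^ 2 + sech x ^ 2 = (sinh x ^ 2 + 1) / cosh x ^ 2"
    by (simp add: tanh_def sech_def power_divide add_divide_distrib)
  also have "\<dots> = 1" using cosh_real_pos[of x] by (simp add: cosh_square_eq[symmetric])
  finally show ?thesis by simp
qed

lemma sech_has_deriv: "(sech has_real_derivative -(sech x * tanh x)) (at x)"
proof -
  have "((\<lambda>x. 1 / cosh x) has_real_derivative -(sinh x) / (cosh x)^2) (at x)"
    using cosh_real_pos[of x] by (auto intro!: derivative_eq_intros simp: power2_eq_square)
  moreover have "-(sinh x) / (cosh x)^2 = -(sech x * tanh x)"
    using cosh_real_pos[of x] by (simp add: tanh_def sech_def power2_eq_square)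
  ultimately show ?thesis by (simp add: sech_def[abs_def])
qed

lemma tanh_has_deriv: "(tanh has_real_derivative 1 - tanh x ^ 2) (at x)"
  using cosh_real_pos[of x] unfolding tanh_def[abs_def]
  by (auto intro!: derivative_eq_intros simp: power2_eq_square field_split_simps)

lemma sech_pow_deriv:
  "((\<lambda>x. c * sech x ^ Suc n) has_real_derivative -(c * real (Suc n) * sech x ^ Suc n * tanh x)) (at x)"
  by (rule derivative_eq_intros refl sech_has_deriv | simp)+

lemma sech_pow_deriv2:
  "((\<lambda>x. -(c * real (Suc n) * sech x ^ Suc n * tanh x)) has_real_derivative
     c * real (Suc n)^2 * sech x ^ Suc n - c * real (Suc n) * real (Suc (Suc n)) * sech x ^ Suc (Suc (Suc n))) (at x)"
proof -
  have "((\<lambda>x. -(c * real (Suc n) * sech x ^ Suc n * tanh x)) has_real_derivative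
     -( -(c * real (Suc n) * real (Suc n) * sech x ^ Suc n * tanh x) * tanh x + c * real (Suc n) * sech x ^ Suc n * (1 - tanh x^2))) (at x)"
    by (rule derivative_eq_intros refl sech_pow_deriv[of "c * real (Suc n)" n] tanh_has_deriv | simp)+
  moreover have "-( -(c * real (Suc n) * real (Suc n) * sech x ^ Suc n * tanh x) * tanh x + c * real (Suc n) * sech x ^ Suc n * (1 - tanh x^2))
     = c * real (Suc n)^2 * sech x ^ Suc n - c * real (Suc n) * real (Suc (Suc n)) * sech x ^ Suc (Suc (Suc n))"
  proof -
    have gen: "T^2 = 1 - S^2 \<Longrightarrow> -(-(c*m*m*P*T)*T + c*m*P*(1-T^2)) = c*m^2*P - c*m*(m+1)*(P*S^2)" for T S P m :: real
      by algebra
    have pe: "sech x ^ Suc (Suc (Suc n)) = sech x ^ Suc n * sech x ^ 2" by (simp add: power2_eq_square)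
    have re: "real (Suc (Suc n)) = real (Suc n) + 1" by simp
    show ?thesis unfolding pe re by (rule gen[OF tanh_sq])
  qed
  ultimately show ?thesis by simp
qed

lemma ops_closed: "sech_ops r sech = (\<lambda>x. (-1)^r * fact (2*r) * sech x ^ (2*r+1))"
proof (induction r)
  case 0 then show ?case by (simp add: fun_eq_iff)
next
  case (Suc r)
  define c :: real where "c = (-1)^r * fact (2*r)"
  have d1: "deriv (sech_ops r sech) = (\<lambda>x. -(c * real (Suc (2*r)) * sech x ^ Suc (2*r) * tanh x))"
    unfolding Suc c_def using sech_pow_deriv[of "(-1)^r * fact (2*r)" "2*r"]
    by (auto simp: fun_eq_iff intro!: DERIV_imp_deriv)
  have d2: "deriv (deriv (sech_ops r sech)) = (\<lambda>x. c * real (Suc (2*r))^2 * sech x ^ Suc (2*r) - c * real (Suc (2*r)) * real (Suc (Suc (2*r))) * sech x ^ Suc (Suc (Suc (2*r))))"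
    unfolding d1 using sech_pow_deriv2[of c "2*r"]
    by (auto simp: fun_eq_iff intro!: DERIV_imp_deriv)
  have f: "fact (2 * Suc r) = (fact (2*r) :: real) * real (Suc (2*r)) * real (Suc (Suc (2*r)))"
    by (simp add: algebra_simps)
  show ?case
    apply (simp only: sech_ops.simps d2)
    by (simp add: fun_eq_iff Suc c_def f algebra_simps)
qed

lemma polyF_deriv: "((\<lambda>x. poly p (tanh x) * sech x) has_real_derivative
     poly (pderiv p * [:1,0,-1:] - p * [:0,1:]) (tanh x) * sech x) (at x)"
proof -
  have "((\<lambda>x. poly p (tanh x) * sech x) has_real_derivative
      poly (pderiv p) (tanh x) * (1 - tanh x ^ 2) * sech x + poly p (tanh x) * (-(sech x * tanh x))) (at x)"
    by (rule derivative_eq_intros refl DERIV_chain2[OF poly_DERIV tanh_has_deriv] sech_has_deriv | simp)+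
  moreover have "poly (pderiv p) (tanh x) * (1 - tanh x ^ 2) * sech x + poly p (tanh x) * (-(sech x * tanh x))
     = poly (pderiv p * [:1,0,-1:] - p * [:0,1:]) (tanh x) * sech x"
    by (simp add: algebra_simps power2_eq_square)
  ultimately show ?thesis by simp
qed

lemma poly_form: "\<exists>p. (deriv^^n) sech = (\<lambda>x. poly p (tanh x) * sech x)"
proof (induction n)
  case 0 then show ?case by (rule exI[of _ "[:1:]"]) (simp add: fun_eq_iff)
next
  case (Suc n)
  then obtain p where p: "(deriv^^n) sech = (\<lambda>x. poly p (tanh x) * sech x)" by blast
  have "(deriv^^Suc n) sech = (\<lambda>x. poly (pderiv p * [:1,0,-1:] - p * [:0,1:]) (tanh x) * sech x)"
    using polyF_deriv[of p] by (simp add: p fun_eq_iff DERIV_imp_deriv)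
  then show ?case by blast
qed

lemma Fder: "((deriv^^n) sech has_real_derivative (deriv^^Suc n) sech x) (at x)"
proof -
  obtain p where p: "(deriv^^n) sech = (\<lambda>x. poly p (tanh x) * sech x)" using poly_form by blast
  have D: "((deriv^^n) sech has_real_derivative poly (pderiv p * [:1,0,-1:] - p * [:0,1:]) (tanh x) * sech x) (at x)"
    unfolding p by (rule polyF_deriv)
  have "(deriv^^Suc n) sech x = poly (pderiv p * [:1,0,-1:] - p * [:0,1:]) (tanh x) * sech x"
    using DERIV_imp_deriv[OF D] by simp
  with D show ?thesis by simp
qed

lemma deriv_sum_F: "deriv (\<lambda>x. c * (\<Sum>\<rho>\<in>A. a \<rho> * (deriv^^(f \<rho>)) sech x))
   = (\<lambda>x. c * (\<Sum>\<rho>\<in>A. a \<rho> * (deriv^^(Suc (f \<rho>))) sech x))"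
proof
  fix x
  show "deriv (\<lambda>x. c * (\<Sum>\<rho>\<in>A. a \<rho> * (deriv^^(f \<rho>)) sech x)) x
   = c * (\<Sum>\<rho>\<in>A. a \<rho> * (deriv^^(Suc (f \<rho>))) sech x)"
    by (rule DERIV_imp_deriv) (rule derivative_eq_intros refl Fder | simp add: mult.commute)+
qed

lemma Gz: "\<rho> > r \<Longrightarrow> G r \<rho> = 0"
  by (induction r arbitrary: \<rho>) auto

lemma Grr: "G r r = 1"
  by (induction r) (auto simp: Gz)

lemma ops_sum: "sech_ops r sech = (\<lambda>x. (-1)^r * (\<Sum>\<rho>\<le>r. (-1)^\<rho> * of_int (G r \<rho>) * (deriv^^(2*\<rho>)) sech x))"
proof (induction r)
  case 0 then show ?case by (simp add: fun_eq_iff)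
next
  case (Suc r)
  define F where "F n x = (deriv^^n) sech x" for n x
  define a where "a \<rho> = (-1)^\<rho> * (of_int (G r \<rho>) :: real)" for \<rho>
  have e1: "deriv (\<lambda>x. (-1)^r * (\<Sum>\<rho>\<le>r. (-1)^\<rho> * of_int (G r \<rho>) * (deriv^^(2*\<rho>)) sech x))
     = (\<lambda>x. (-1)^r * (\<Sum>\<rho>\<le>r. (-1)^\<rho> * of_int (G r \<rho>) * (deriv^^(Suc (2*\<rho>))) sech x))"
    by (rule deriv_sum_F)
  have e2: "deriv (\<lambda>x. (-1)^r * (\<Sum>\<rho>\<le>r. (-1)^\<rho> * of_int (G r \<rho>) * (deriv^^(Suc (2*\<rho>))) sech x))
     = (\<lambda>x. (-1)^r * (\<Sum>\<rho>\<le>r. (-1)^\<rho> * of_int (G r \<rho>) * (deriv^^(Suc (Suc (2*\<rho>)))) sech x))"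
    by (rule deriv_sum_F)
  have d2: "deriv (deriv (sech_ops r sech)) = (\<lambda>x. (-1)^r * (\<Sum>\<rho>\<le>r. (-1)^\<rho> * of_int (G r \<rho>) * (deriv^^(Suc (Suc (2*\<rho>)))) sech x))"
    unfolding Suc e1 e2 ..
  have s1: "(\<Sum>\<rho>\<le>r. a \<rho> * F (2*\<rho>) x) = a 0 * F 0 x + (\<Sum>\<rho>\<le>r. a (Suc \<rho>) * F (2*Suc \<rho>) x)" for x
  proof -
    have "(\<Sum>\<rho>\<le>r. a \<rho> * F (2*\<rho>) x) = (\<Sum>\<rho>\<le>Suc r. a \<rho> * F (2*\<rho>) x)"
      by (simp add: a_def Gz)
    also have "\<dots> = a 0 * F 0 x + (\<Sum>\<rho>\<le>r. a (Suc \<rho>) * F (2*Suc \<rho>) x)"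
      by (subst sum.atMost_Suc_shift) simp
    finally show ?thesis .
  qed
  have s2: "(\<Sum>\<rho>\<le>Suc r. (-1)^\<rho> * of_int (G (Suc r) \<rho>) * F (2*\<rho>) x)
     = (2 * real r + 1)^2 * a 0 * F 0 x + (\<Sum>\<rho>\<le>r. ((2 * real r + 1)^2 * a (Suc \<rho>) - a \<rho>) * F (2*Suc \<rho>) x)" for x
    apply (subst sum.atMost_Suc_shift)
    apply (simp add: a_def algebra_simps)
    apply (rule sum.cong, simp_all add: algebra_simps)
    done
  show ?case
  proof (rule ext)
    fix x
    have "sech_ops (Suc r) sech x = (-1)^r * (\<Sum>\<rho>\<le>r. a \<rho> * F (2*Suc \<rho>) x) - (2 * real r + 1)^2 * ((-1)^r * (\<Sum>\<rho>\<le>r. a \<rho> * F (2*\<rho>) x))"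
      apply (simp only: sech_ops.simps)
      apply (simp only: d2)
      apply (simp only: Suc)
      by (simp add: F_def a_def)
    also have "\<dots> = (-1)^Suc r * (\<Sum>\<rho>\<le>Suc r. (-1)^\<rho> * of_int (G (Suc r) \<rho>) * F (2*\<rho>) x)"
      unfolding s1 s2 by (simp add: algebra_simps sum.distrib sum_distrib_left sum_subtractf sum_negf)
    finally show "sech_ops (Suc r) sech x = (-1)^Suc r * (\<Sum>\<rho>\<le>Suc r. (-1)^\<rho> * of_int (G (Suc r) \<rho>) * (deriv^^(2*\<rho>)) sech x)"
      by (simp add: F_def)
  qed
qed

theorem mainTheorem1:
  fixes r :: nat and x :: real
  shows "sech x ^ (2*r+1) = (-1)^r / fact (2*r) * sech_ops r sech x
       \<and> sech x ^ (2*r+1) = 1 / fact (2*r) *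
           (\<Sum>\<rho>\<le>r. (-1)^\<rho> * of_int (G r \<rho>) * (deriv ^^ (2*\<rho>)) sech x)
       \<and> G r r = 1"
proof (intro conjI)
  have sq: "((-1::real)^r) * (-1)^r = 1" by (simp flip: power_mult_distrib)
  show 1: "sech x ^ (2*r+1) = (-1)^r / fact (2*r) * sech_ops r sech x"
    unfolding ops_closed using sq by simp
  show "sech x ^ (2*r+1) = 1 / fact (2*r) *
           (\<Sum>\<rho>\<le>r. (-1)^\<rho> * of_int (G r \<rho>) * (deriv ^^ (2*\<rho>)) sech x)"
    unfolding 1 ops_sum using sq by (simp add: mult.assoc[symmetric])
  show "G r r = 1" by (rule Grr)
qed

end
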